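(* Let $\mu$ be a probability distribution supported in the unit square $[0,1]^2$, let $\mu_n$ be an empirical distribution of $\mu$ on $n$ samples, let $\alpha\ge 0$, and let $\mathcal{G}$ be a grid partitioning $[0,1]^2$ into axis-aligned square cells of side length $n^{-\alpha}$. Then with high probability $\mathrm{Exc}_\mu(\mathcal{G})=\tilde O(n^{\alpha-1/2})$.
   Context: For a cell $\Box$ of $\mathcal{G}$, $\mu(\Box)$ and $\mu_n(\Box)$ denote the mass of $\mu$ and $\mu_n$ in $\Box$. The excess of a cell is $\mathrm{Exc}_\mu(\Box)=\max\{0,\mu(\Box)-\mu_n(\Box)\}$ and the excess of the grid is $\mathrm{Exc}_\mu(\mathcal{G})=\sum_{\Box\in\mathcal{G}}\mathrm{Exc}_\mu(\Box)$. An empirical distribution $\mu_n$ is $\frac1n\sum_{i=1}^n\delta_{x_i}$ with $x_1,\dots,x_n$ i.i.d. from $\mu$. $\tilde O(\cdot)$ hides polylogarithmic factors in $n$; "with high probability" means with probability at least $1-n^{-c}$ for some constant $c>0$. *)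

theory Defs
  imports "HOL-Probability.Probability"
begin

text \<open>Coordinate t in [0,1] lies in
  column i iff i*s < t \<le> (i+1)*s (with t = 0 in column 0); there are
  K = ceil(1/s) columns, the last one possibly truncated at 1.\<close>

definition grid_K :: "real \<Rightarrow> nat" where
  "grid_K s = nat \<lceil>1 / s\<rceil>"

definition cell_idx :: "real \<Rightarrow> real \<Rightarrow> nat" where
  "cell_idx s t = nat (\<lceil>t / s\<rceil> - 1)"

definition grid_cell :: "real \<Rightarrow> nat \<times> nat \<Rightarrow> (real \<times> real) set" where
  "grid_cell s ij = {p. p \<in> {0..1} \<times> {0..1} \<and> (cell_idx s (fst p), cell_idx s (snd p)) = ij}"

definition emp_mass :: "nat \<Rightarrow> (nat \<Rightarrow> 'a) \<Rightarrow> 'a set \<Rightarrow> real" where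
  "emp_mass n x A = real (card {i \<in> {..<n}. x i \<in> A}) / real n"

definition grid_excess :: "(real \<times> real) measure \<Rightarrow> nat \<Rightarrow> (nat \<Rightarrow> real \<times> real) \<Rightarrow> real \<Rightarrow> real" where
  "grid_excess \<mu> n x s =
     (\<Sum>ij \<in> {..<grid_K s} \<times> {..<grid_K s}.
        max 0 (measure \<mu> (grid_cell s ij) - emp_mass n x (grid_cell s ij)))"

end

theory Submission
  imports Defs
begin

lemma cell_idx_meas[measurable]: "cell_idx s \<in> borel \<rightarrow>\<^sub>M count_space UNIV"
  unfolding cell_idx_def by measurable

lemma grid_cell_borel[measurable]: "grid_cell s ij \<in> sets borel"
proof -
  obtain i j where ij: "ij = (i,j)" by (cases ij)
  have "grid_cell s ij = {p \<in> space (borel \<Otimes>\<^sub>M borel). fst p \<in> {0..1} \<and> snd p \<in> {0..1} \<and> cell_idx s (fst p) = i \<and> cell_idx s (snd p) = j}"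
    unfolding grid_cell_def ij by (auto simp: space_pair_measure)
  also have "\<dots> \<in> sets (borel \<Otimes>\<^sub>M (borel::real measure))" by measurable
  finally show ?thesis by (metis borel_prod)
qed


lemma card_as_sum: "finite I \<Longrightarrow> real (card {i\<in>I. x i \<in> A}) = (\<Sum>i\<in>I. indicator A (x i))"
proof -
  assume "finite I"
  have "real (card {i\<in>I. x i \<in> A}) = (\<Sum>i\<in>{i\<in>I. x i \<in> A}. 1)" by simp
  also have "\<dots> = (\<Sum>i\<in>I. if x i \<in> A then 1 else 0)"
    using \<open>finite I\<close> by (rule sum.inter_filter)
  also have "\<dots> = (\<Sum>i\<in>I. indicator A (x i))" by (simp add: indicator_def of_bool_def)
  finally show ?thesis .
qed

lemma emp_mass_meas[measurable]:
  assumes "A \<in> sets M"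
  shows "(\<lambda>x. emp_mass n x A) \<in> borel_measurable (PiM {..<n} (\<lambda>_. M))"
proof -
  have "(\<lambda>x. emp_mass n x A) = (\<lambda>x. (\<Sum>i\<in>{..<n}. indicator A (x i)) / real n)"
    unfolding emp_mass_def by (subst card_as_sum) auto
  also have "\<dots> \<in> borel_measurable (PiM {..<n} (\<lambda>_. M))" using assms by measurable
  finally show ?thesis .
qed

lemma indep_coords:
  assumes M: "prob_space M" and n: "n > 0"
  shows "prob_space.indep_vars (PiM {..<n} (\<lambda>_. M)) (\<lambda>_. M) (\<lambda>i x. x i) {..<n}"
proof -
  let ?P = "PiM {..<n} (\<lambda>_. M)"
  interpret P: prob_space ?P by (intro prob_space_PiM M)
  have "distr ?P (PiM {..<n} (\<lambda>_. M)) (\<lambda>x. \<lambda>i\<in>{..<n}. x i) = distr ?P ?P (\<lambda>x. x)"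
    by (intro distr_cong) (auto simp: space_PiM PiE_restrict)
  also have "\<dots> = ?P" by simp
  also have "\<dots> = PiM {..<n} (\<lambda>i. distr ?P M (\<lambda>x. x i))"
    by (intro PiM_cong refl) (simp add: distr_PiM_component[of "{..<n}" "\<lambda>_. M"] M)
  finally have eq: "distr ?P (PiM {..<n} (\<lambda>_. M)) (\<lambda>x. \<lambda>i\<in>{..<n}. x i) = PiM {..<n} (\<lambda>i. distr ?P M (\<lambda>x. x i))" .
  show ?thesis
    using n by (subst P.indep_vars_iff_distr_eq_PiM') (auto simp: eq)
qed

lemma hoeffding_emp:
  assumes M: "prob_space M" and A: "A \<in> sets M" and n: "n > 0" and t: "t \<ge> 0"
  shows "measure (PiM {..<n} (\<lambda>_. M)) {x \<in> space (PiM {..<n} (\<lambda>_. M)). emp_mass n x A \<le> measure M A - t}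
          \<le> exp (- 2 * real n * t^2)"
proof -
  let ?P = "PiM {..<n} (\<lambda>_. M)"
  interpret P: prob_space ?P by (intro prob_space_PiM M)
  define X :: "nat \<Rightarrow> (nat \<Rightarrow> _) \<Rightarrow> real" where "X = (\<lambda>i x. indicator A (x i))"
  have ind: "P.indep_vars (\<lambda>_. borel) X {..<n}"
    unfolding X_def
    by (rule P.indep_vars_compose2[OF indep_coords[OF M n]]) (use A in measurable)
  have expX: "P.expectation (X i) = measure M A" if "i < n" for i
  proof -
    have "P.expectation (X i) = integral\<^sup>L (distr ?P M (\<lambda>x. x i)) (indicator A)"
      unfolding X_def by (subst integral_distr) (use A that in auto)
    also have "\<dots> = integral\<^sup>L M (indicator A)" using that by (simp add: distr_PiM_component[of "{..<n}" "\<lambda>_. M"] M)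
    also have "\<dots> = measure M A" using A by simp
    finally show ?thesis .
  qed
  interpret H: Hoeffding_ineq ?P "{..<n}" X "\<lambda>_. 0" "\<lambda>_. 1" "\<Sum>i<n. P.expectation (X i)"
  proof unfold_locales
    show "finite {..<n}" by simp
    show "P.indep_vars (\<lambda>_. borel) X {..<n}" by (rule ind)
    show "AE x in ?P. X i x \<in> {0..1}" if "i \<in> {..<n}" for i
      by (auto simp: X_def indicator_def)
  qed simp
  have mu: "(\<Sum>i<n. P.expectation (X i)) = real n * measure M A"
    using expX by simp
  have "P.prob {x \<in> space ?P. (\<Sum>i\<in>{..<n}. X i x) \<le> (\<Sum>i<n. P.expectation (X i)) - real n * t}
       \<le> exp (-2 * (real n * t)\<^sup>2 / (\<Sum>i\<in>{..<n}. (1 - 0)\<^sup>2))"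
    by (rule H.Hoeffding_ineq_le) (use n t in auto)
  also have "\<dots> = exp (- 2 * real n * t^2)"
    using n by (simp add: power2_eq_square)
  also have "{x \<in> space ?P. (\<Sum>i\<in>{..<n}. X i x) \<le> (\<Sum>i<n. P.expectation (X i)) - real n * t}
        = {x \<in> space ?P. emp_mass n x A \<le> measure M A - t}"
  proof -
    have "emp_mass n x A \<le> measure M A - t \<longleftrightarrow> (\<Sum>i\<in>{..<n}. X i x) \<le> real n * measure M A - real n * t" for x
    proof -
      have "emp_mass n x A = (\<Sum>i\<in>{..<n}. X i x) / real n"
        unfolding emp_mass_def X_def by (subst card_as_sum) auto
      then have e: "(\<Sum>i\<in>{..<n}. X i x) = real n * emp_mass n x A" using n by simp
      have "emp_mass n x A \<le> measure M A - t \<longleftrightarrow> real n * emp_mass n x A \<le> real n * (measure M A - t)"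
        using n by simp
      then show ?thesis unfolding e by (simp add: algebra_simps)
    qed
    then show ?thesis by (simp add: mu)
  qed
  finally show ?thesis .
qed


lemma numeric:
  fixes n :: nat and \<alpha> :: real
  assumes n: "n \<ge> 3" and a: "\<alpha> \<ge> 0"
  shows "2 ^ (grid_K (real n powr (-\<alpha>)) * grid_K (real n powr (-\<alpha>)))
          * exp (- 2 * real n * (2 * real n powr (\<alpha> - 1/2) * ln (real n))^2) \<le> real n powr (-1)"
proof -
  define p where "p = real n powr \<alpha>"
  define L where "L = ln (real n)"
  define K where "K = grid_K (real n powr (-\<alpha>))"
  have n0: "real n > 0" using n by simp
  have p1: "p \<ge> 1" unfolding p_def using n a by (simp add: ge_one_powr_ge_zero)
  have L1: "L \<ge> 1"
  proof -
    have "exp 1 \<le> real n" using exp_le n by linarith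
    then have "ln (exp 1) \<le> ln (real n)" using n0 by (subst ln_le_cancel_iff) auto
    then show ?thesis unfolding L_def by simp
  qed
  have K: "real K \<le> 2 * p"
  proof -
    have "1 / real n powr (-\<alpha>) = p" unfolding p_def by (simp add: powr_minus divide_inverse)
    then have "K = nat \<lceil>p\<rceil>" unfolding K_def grid_K_def by simp
    then have "real K \<le> p + 1" using p1 by linarith
    then show ?thesis using p1 by linarith
  qed
  have KK: "real (K * K) \<le> 4 * p^2"
  proof -
    have "real (K*K) = real K * real K" by simp
    also have "\<dots> \<le> (2*p) * (2*p)" using K by (intro mult_mono) auto
    finally show ?thesis by (simp add: power2_eq_square)
  qed
  have t2: "2 * real n * (2 * real n powr (\<alpha> - 1/2) * L)^2 = 8 * p^2 * L^2"
  proof -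
    have "(real n powr (\<alpha> - 1/2))^2 = real n powr ((\<alpha> - 1/2) + (\<alpha> - 1/2))"
      by (simp only: power2_eq_square powr_add[symmetric])
    also have "\<dots> = real n powr (\<alpha> + \<alpha>) / real n powr 1"
      by (subst powr_diff[symmetric]) (simp add: algebra_simps)
    also have "\<dots> = p^2 / real n"
      unfolding p_def using n0 by (simp only: power2_eq_square powr_add[symmetric] powr_one_gt_zero_iff) simp
    finally have "(real n powr (\<alpha> - 1/2))^2 = p^2 / real n" .
    then show ?thesis using n0 by (simp add: power_mult_distrib)
  qed
  have "(2::real) ^ (K*K) = exp (real (K*K) * ln 2)"
    by (simp add: powr_realpow[symmetric] powr_def)
  also have "\<dots> \<le> exp (4 * p^2)"
  proof -
    have "real (K*K) * ln 2 \<le> real (K*K) * 1" using ln_2_less_1 by (intro mult_left_mono) auto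
    also have "\<dots> \<le> 4 * p^2" using KK by simp
    finally show ?thesis by simp
  qed
  finally have A: "(2::real) ^ (K*K) \<le> exp (4 * p^2)" .
  have "(2::real) ^ (K*K) * exp (- (8 * p^2 * L^2)) \<le> exp (4 * p^2) * exp (- (8 * p^2 * L^2))"
    using A by (intro mult_right_mono) auto
  also have "\<dots> = exp (4 * p^2 - 8 * p^2 * L^2)" by (simp add: exp_add[symmetric])
  also have "\<dots> \<le> exp (- L)"
  proof -
    have "p^2 \<ge> 1" using p1 by simp
    have "L^2 \<ge> 1" using L1 by simp
    have f1: "p^2 \<le> p^2 * L^2" using \<open>L^2 \<ge> 1\<close> \<open>p^2 \<ge> 1\<close>
      using mult_left_mono[of 1 "L^2" "p^2"] by simp
    have f2: "L \<le> L^2" using L1 by (simp add: power2_eq_square)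
    have f3: "L^2 \<le> p^2 * L^2" using \<open>p^2 \<ge> 1\<close> mult_right_mono[of 1 "p^2" "L^2"] by simp
    have g: "\<And>(a::real) q l. a \<le> q \<Longrightarrow> l \<le> q \<Longrightarrow> 0 \<le> l \<Longrightarrow> 4*a - 8*q \<le> -l" by linarith
    have e: "8 * p^2 * L^2 = 8 * (p^2 * L^2)" by simp
    have "4 * p^2 - 8 * p^2 * L^2 \<le> - L" unfolding e
      using order_trans[OF f2 f3] f1 L1 by (rule_tac g) auto
    then show ?thesis by simp
  qed
  also have "\<dots> = real n powr (-1)" unfolding L_def using n0 by (simp add: powr_def)
  finally have fin: "2 ^ (K * K) * exp (- (8 * p^2 * L^2)) \<le> real n powr (-1)" .
  have t2': "- 2 * real n * (2 * real n powr (\<alpha> - 1/2) * ln (real n))^2 = - (8 * p^2 * L^2)"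
    using t2 unfolding L_def by linarith
  show ?thesis unfolding K_def[symmetric] t2' using fin .
qed


lemma grid_cell_disj: "disjoint_family_on (grid_cell s) S"
  unfolding disjoint_family_on_def grid_cell_def by auto

lemma emp_mass_Union:
  assumes "finite T"
  shows "emp_mass n x (\<Union>(grid_cell s ` T)) = (\<Sum>ij\<in>T. emp_mass n x (grid_cell s ij))"
proof -
  have "{i \<in> {..<n}. x i \<in> \<Union>(grid_cell s ` T)} = (\<Union>ij\<in>T. {i \<in> {..<n}. x i \<in> grid_cell s ij})" by auto
  moreover have "card (\<Union>ij\<in>T. {i \<in> {..<n}. x i \<in> grid_cell s ij}) = (\<Sum>ij\<in>T. card {i \<in> {..<n}. x i \<in> grid_cell s ij})"
  proof (rule card_UN_disjoint')
    show "disjoint_family_on (\<lambda>ij. {i \<in> {..<n}. x i \<in> grid_cell s ij}) T"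
      using grid_cell_disj[of s T] unfolding disjoint_family_on_def by blast
  qed (use assms in auto)
  ultimately show ?thesis unfolding emp_mass_def by (simp add: sum_divide_distrib)
qed

lemma excess_repr:
  assumes M: "prob_space M" and cells: "\<And>ij. grid_cell s ij \<in> sets M"
  shows "\<exists>T \<in> Pow ({..<grid_K s} \<times> {..<grid_K s}). grid_excess M n x s
            = measure M (\<Union>(grid_cell s ` T)) - emp_mass n x (\<Union>(grid_cell s ` T))"
proof -
  interpret prob_space M by (rule M)
  define I where "I = {..<grid_K s} \<times> {..<grid_K s}"
  define d where "d = (\<lambda>ij. measure M (grid_cell s ij) - emp_mass n x (grid_cell s ij))"
  define T where "T = {ij \<in> I. d ij > 0}"
  have fin: "finite I" unfolding I_def by simp
  have "grid_excess M n x s = (\<Sum>ij\<in>I. if d ij > 0 then d ij else 0)"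
    unfolding grid_excess_def I_def[symmetric] d_def[symmetric] by (intro sum.cong) (auto simp: d_def)
  also have "\<dots> = (\<Sum>ij\<in>T. d ij)" unfolding T_def by (rule sum.inter_filter[symmetric, OF fin])
  also have "\<dots> = measure M (\<Union>(grid_cell s ` T)) - emp_mass n x (\<Union>(grid_cell s ` T))"
  proof -
    have fT: "finite T" using fin unfolding T_def by simp
    have "measure M (\<Union>(grid_cell s ` T)) = (\<Sum>ij\<in>T. measure M (grid_cell s ij))"
      by (rule finite_measure_finite_Union) (use fT cells grid_cell_disj in auto)
    then show ?thesis unfolding d_def sum_subtractf emp_mass_Union[OF fT] by simp
  qed
  finally show ?thesis using T_def I_def by blast
qed

theorem lemma3p5:
  fixes \<alpha> :: real
  assumes "\<alpha> \<ge> 0"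
  shows "\<exists>C > 0. \<exists>k :: nat. \<exists>c > 0. \<exists>N :: nat. \<forall>n \<ge> N. \<forall>\<mu> :: (real \<times> real) measure.
           prob_space \<mu> \<and> sets \<mu> = sets borel \<and> emeasure \<mu> ({0..1} \<times> {0..1}) = 1 \<longrightarrow>
           (let P = PiM {..<n} (\<lambda>_. \<mu>);
                G = {x \<in> space P. grid_excess \<mu> n x (real n powr (- \<alpha>))
                                     \<le> C * real n powr (\<alpha> - 1/2) * ln (real n) ^ k}
            in G \<in> sets P \<and> measure P G \<ge> 1 - real n powr (- c))"
proof -
  have main: "G \<in> sets P \<and> measure P G \<ge> 1 - real n powr (- 1)"
    if n: "n \<ge> 3" and M: "prob_space \<mu>" and S: "sets \<mu> = sets borel"
      and P_def: "P = PiM {..<n} (\<lambda>_. \<mu>)"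
      and G_def: "G = {x \<in> space P. grid_excess \<mu> n x (real n powr (- \<alpha>))
                                     \<le> 2 * real n powr (\<alpha> - 1/2) * ln (real n) ^ 1}"
    for n :: nat and \<mu> :: "(real \<times> real) measure" and P G
  proof -
    define s where "s = real n powr (- \<alpha>)"
    define K where "K = grid_K s"
    define I where "I = {..<K} \<times> {..<K}"
    define t where "t = 2 * real n powr (\<alpha> - 1/2) * ln (real n)"
    define A where "A = (\<lambda>T. \<Union>(grid_cell s ` T))"
    define E where "E = (\<lambda>T. {x \<in> space P. emp_mass n x (A T) \<le> measure \<mu> (A T) - t})"
    interpret P: prob_space P unfolding P_def by (intro prob_space_PiM M)
    have n0: "n > 0" using n by simp
    have t0: "t \<ge> 0" unfolding t_def using n by simp
    have cells[measurable]: "grid_cell s ij \<in> sets \<mu>" for ij using S by simp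
    have AT[measurable]: "A T \<in> sets \<mu>" if "finite T" for T
      unfolding A_def using that by (intro sets.finite_UN) auto
    have finI: "finite I" unfolding I_def by simp
    have fmeas: "(\<lambda>x. grid_excess \<mu> n x s) \<in> borel_measurable P"
      unfolding grid_excess_def P_def by measurable
    have Gs: "G \<in> sets P" unfolding G_def s_def[symmetric] using fmeas by measurable
    have Es: "E T \<in> sets P" if "finite T" for T
      unfolding E_def P_def using that by measurable
    have sub: "space P - G \<subseteq> (\<Union>T\<in>Pow I. E T)"
    proof
      fix x assume x: "x \<in> space P - G"
      obtain T where T: "T \<in> Pow I" and eq: "grid_excess \<mu> n x s = measure \<mu> (A T) - emp_mass n x (A T)"
        using excess_repr[OF M cells] unfolding A_def I_def K_def by blast
      have "\<not> grid_excess \<mu> n x s \<le> t" using x unfolding G_def s_def t_def power_one by auto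
      then have "x \<in> E T" using x eq unfolding E_def by auto
      then show "x \<in> (\<Union>T\<in>Pow I. E T)" using T by blast
    qed
    have "P.prob (space P - G) \<le> P.prob (\<Union>T\<in>Pow I. E T)"
      using sub Es finI by (intro P.finite_measure_mono) (auto intro!: sets.finite_UN simp: finite_subset)
    also have "\<dots> \<le> (\<Sum>T\<in>Pow I. P.prob (E T))"
      using Es finI by (intro P.finite_measure_subadditive_finite) (auto simp: finite_subset)
    also have "\<dots> \<le> (\<Sum>T\<in>Pow I. exp (- 2 * real n * t^2))"
    proof (rule sum_mono)
      fix T assume "T \<in> Pow I"
      then have "finite T" using finI by (auto simp: finite_subset)
      show "P.prob (E T) \<le> exp (- 2 * real n * t^2)"
        unfolding E_def P_def by (rule hoeffding_emp[OF M AT[OF \<open>finite T\<close>] n0 t0])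
    qed
    also have "\<dots> = 2 ^ (K * K) * exp (- 2 * real n * t^2)"
      using finI by (simp add: card_Pow I_def card_cartesian_product)
    also have "\<dots> \<le> real n powr (-1)"
      unfolding K_def s_def t_def by (rule numeric[OF n assms])
    finally have "P.prob (space P - G) \<le> real n powr (-1)" .
    moreover have "P.prob (space P - G) = 1 - P.prob G" using Gs by (rule P.prob_compl)
    ultimately show ?thesis using Gs by simp
  qed
  show ?thesis
    apply (rule exI[of _ "2::real"], rule conjI, simp)
    apply (rule exI[of _ "1::nat"])
    apply (rule exI[of _ "1::real"], rule conjI, simp)
    apply (rule exI[of _ "3::nat"])
    apply (intro allI impI)
    unfolding Let_def
    apply (rule main[OF _ _ _ refl refl])
      apply blast+
    done
qed

end
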